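(* Suppose the hyper-triple $\{P\}\,C\,\{Q\}$ is valid, and let $S$ be a set of initial extended states with $S \models P$. Then: (1) the set $\mathrm{sem}(C,S)$ of reachable states satisfies the relaxation of $Q$, i.e. $\mathrm{sem}(C,S) \in \mathcal{R}(Q)$; (2) if, additionally, $Q$ does not mention the label $\mathrm{uk}$, contains no hyper separating conjunction $\star$, and constrains every existentially-quantified state to carry label $\mathrm{ok}$ or $\mathrm{er}$, then $\mathrm{sem}(C,S) \models Q$.
   Context: Setting: Hyper Separation Logic (HSL) for a heap-manipulating imperative language. An extended state is $\omega = \langle \Lambda, \sigma_\epsilon\rangle$ with a logical store $\Lambda$ (total map from logical variables to $\mathbb{N}$), a program state $\sigma = \langle s, h\rangle$ (total store $s$ from program variables to $\mathbb{N}$, finite partial heap $h$ from $\mathbb{N}$ to $\mathbb{N}\cup\{\bot\}$), and a label $\epsilon \in \{\mathrm{ok}, \mathrm{er}, \mathrm{uk}\}$. Assertions are sets of extended states; hyper-assertions are sets of such sets. Syntactic hyper-assertions use state quantifiers $\forall\langle\sigma\rangle$, $\exists\langle\sigma\rangle$ and atoms $\sigma(\epsilon : p)$ meaning that the state bound to $\sigma$ has label $\epsilon$ and satisfies the separation-logic assertion $p$. $\mathrm{sem}(C,S)$: each $\mathrm{ok}$ state of $S$ is executed by $C$ (small-step semantics); successful terminal executions yield $\mathrm{ok}$ states; executions aborting with an ordinary (local) error (failed assertion, null dereference, access to freed memory) yield an $\mathrm{er}$ state recording the state at the abort; executions aborting with a domain-violation error (access to unallocated memory) yield a $\mathrm{uk}$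 state recording the state at the abort; $\mathrm{er}$ and $\mathrm{uk}$ states of $S$ are kept unchanged; logical stores are preserved. State combination: $\langle\Lambda,(s,h)_\epsilon\rangle = \langle\Lambda_1,(s_1,h_1)_{\epsilon_1}\rangle \oplus \langle\Lambda_2,(s_2,h_2)_{\epsilon_2}\rangle$ iff $s=s_1=s_2$, $\Lambda=\Lambda_1=\Lambda_2$, $h$ is the disjoint union of $h_1,h_2$, and $\epsilon$ is $\mathrm{uk}$ if either $\epsilon_i$ is $\mathrm{uk}$, else $\mathrm{er}$ if either is $\mathrm{er}$, else $\mathrm{ok}$. $p * q = \{\omega \mid \omega_p\in p, \omega_q\in q, \omega = \omega_p\oplus\omega_q\}$. Hyper separating conjunction: $S \in P\star Q$ iff there are $S_P\in P$, $S_Q\in Q$ with $S\subseteq S_P * S_Q$, and for every $\omega_1\in S_P$ there exist $\omega\in S$, $\omega_2\in S_Q$ with $\omega=\omega_1\oplus\omega_2$, and symmetrically for every $\omega_2\in S_Q$. Relaxation: a state $\langle\Lambda,\sigma_\epsilon\rangle$ overapproximates $\langle\Lambda',\sigma'_{\epsilon'}\rangle$ iff ($\epsilon=\mathrm{uk}$ and $\Lambda=\Lambda'$) or ($\epsilon\in\{\mathrm{ok},\mathrm{er}\}$ and the two states are equal). A set $S_0$ overapproximates $S$ iff every $\mathrm{ok}$/$\mathrm{er}$ state of $S_0$ is in $S$ and every state of $S$ is overapproximated by some state of $S_0$. $\mathcal{R}(Q) = \{S \mid \exists S_0\in Q.\ S_0 \text{ overapproximates } S\}$. Validity: $\{P\}\,C\,\{Q\}$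 is valid iff for every admissible frame $f$ (a set of $\mathrm{ok}$-labeled extended states whose membership does not depend on the values of program variables modified by $C$) and every $S \in P \star \mathcal{P}(f)$, we have $\mathrm{sem}(C,S) \in \mathcal{R}(Q\star\mathcal{P}(f))$, where $\mathcal{P}(f)$ is the powerset of $f$. *)

theory Defs
  imports Main "HOL-Library.Finite_Map"
begin

type_synonym pvar = string
type_synonym lvar = string
type_synonym val = nat

datatype hval = Val val | Bot   \<comment> \<open>Bot: deallocated cell\<close>

type_synonym store = "pvar \<Rightarrow> val"
type_synonym heap = "(nat, hval) fmap"
type_synonym pstate = "store \<times> heap"
type_synonym lstore = "lvar \<Rightarrow> val"

datatype label = Ok | Er | Uk

type_synonym ext = "lstore \<times> pstate \<times> label"
type_synonym assn = "ext set"
type_synonym hyperassn = "ext set set"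

definition lab :: "ext \<Rightarrow> label" where "lab \<omega> = snd (snd \<omega>)"

type_synonym aexp = "store \<Rightarrow> val"
type_synonym bexp = "store \<Rightarrow> bool"

datatype cmd =
    Skip
  | Assign pvar aexp
  | Havoc pvar
  | Assume bexp
  | Assert bexp
  | Seq cmd cmd
  | Choice cmd cmd
  | Iter cmd
  | Alloc pvar
  | Free aexp
  | Load pvar aexp
  | Store aexp aexp

fun modv :: "cmd \<Rightarrow> pvar set" where
  "modv (Assign x _) = {x}"
| "modv (Havoc x) = {x}"
| "modv (Alloc x) = {x}"
| "modv (Load x _) = {x}"
| "modv (Seq C1 C2) = modv C1 \<union> modv C2"
| "modv (Choice C1 C2) = modv C1 \<union> modv C2"
| "modv (Iter C) = modv C"
| "modv _ = {}"

text \<open>Errors when accessing address a in heap h: null pointer or freed cell give an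
ordinary (local) error Er; an unallocated cell gives a domain-violation error Uk.\<close>
inductive acc_err :: "heap \<Rightarrow> nat \<Rightarrow> label \<Rightarrow> bool" where
  "acc_err h 0 Er"
| "a \<noteq> 0 \<Longrightarrow> fmlookup h a = Some Bot \<Longrightarrow> acc_err h a Er"
| "a \<noteq> 0 \<Longrightarrow> fmlookup h a = None \<Longrightarrow> acc_err h a Uk"

inductive step :: "cmd \<times> pstate \<Rightarrow> cmd \<times> pstate \<Rightarrow> bool" where
  s_assign: "step (Assign x e, (s, h)) (Skip, (s(x := e s), h))"
| s_havoc: "step (Havoc x, (s, h)) (Skip, (s(x := v), h))"
| s_assume: "b s \<Longrightarrow> step (Assume b, (s, h)) (Skip, (s, h))"
| s_assert: "b s \<Longrightarrow> step (Assert b, (s, h)) (Skip, (s, h))"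
| s_seq1: "step (Seq Skip C2, \<sigma>) (C2, \<sigma>)"
| s_seq2: "step (C1, \<sigma>) (C1', \<sigma>') \<Longrightarrow> step (Seq C1 C2, \<sigma>) (Seq C1' C2, \<sigma>')"
| s_choice1: "step (Choice C1 C2, \<sigma>) (C1, \<sigma>)"
| s_choice2: "step (Choice C1 C2, \<sigma>) (C2, \<sigma>)"
| s_iter1: "step (Iter C, \<sigma>) (Skip, \<sigma>)"
| s_iter2: "step (Iter C, \<sigma>) (Seq C (Iter C), \<sigma>)"
| s_alloc: "a \<noteq> 0 \<Longrightarrow> fmlookup h a = None \<or> fmlookup h a = Some Bot \<Longrightarrow>
     step (Alloc x, (s, h)) (Skip, (s(x := a), fmupd a (Val v) h))"
| s_free: "e s \<noteq> 0 \<Longrightarrow> fmlookup h (e s) = Some (Val v) \<Longrightarrow>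
     step (Free e, (s, h)) (Skip, (s, fmupd (e s) Bot h))"
| s_load: "e s \<noteq> 0 \<Longrightarrow> fmlookup h (e s) = Some (Val v) \<Longrightarrow>
     step (Load x e, (s, h)) (Skip, (s(x := v), h))"
| s_store: "e s \<noteq> 0 \<Longrightarrow> fmlookup h (e s) = Some (Val v) \<Longrightarrow>
     step (Store e e', (s, h)) (Skip, (s, fmupd (e s) (Val (e' s)) h))"

inductive aborts :: "cmd \<Rightarrow> pstate \<Rightarrow> label \<Rightarrow> bool" where
  a_assert: "\<not> b s \<Longrightarrow> aborts (Assert b) (s, h) Er"
| a_free: "acc_err h (e s) \<epsilon> \<Longrightarrow> aborts (Free e) (s, h) \<epsilon>"
| a_load: "acc_err h (e s) \<epsilon> \<Longrightarrow> aborts (Load x e) (s, h) \<epsilon>"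
| a_store: "acc_err h (e s) \<epsilon> \<Longrightarrow> aborts (Store e e') (s, h) \<epsilon>"
| a_seq: "aborts C1 \<sigma> \<epsilon> \<Longrightarrow> aborts (Seq C1 C2) \<sigma> \<epsilon>"

definition sem :: "cmd \<Rightarrow> ext set \<Rightarrow> ext set" where
  "sem C S =
     {(\<Lambda>, \<sigma>', Ok) | \<Lambda> \<sigma> \<sigma>'. (\<Lambda>, \<sigma>, Ok) \<in> S \<and> step\<^sup>*\<^sup>* (C, \<sigma>) (Skip, \<sigma>')}
   \<union> {(\<Lambda>, \<sigma>', \<epsilon>) | \<Lambda> \<sigma> \<sigma>' C' \<epsilon>. (\<Lambda>, \<sigma>, Ok) \<in> S \<and> step\<^sup>*\<^sup>* (C, \<sigma>) (C', \<sigma>')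
                                  \<and> aborts C' \<sigma>' \<epsilon>}
   \<union> {\<omega> \<in> S. lab \<omega> \<noteq> Ok}"

fun ljoin :: "label \<Rightarrow> label \<Rightarrow> label" where
  "ljoin Uk _ = Uk"
| "ljoin _ Uk = Uk"
| "ljoin Er _ = Er"
| "ljoin _ Er = Er"
| "ljoin Ok Ok = Ok"

definition comb :: "ext \<Rightarrow> ext \<Rightarrow> ext \<Rightarrow> bool" where
  "comb \<omega>1 \<omega>2 \<omega> \<longleftrightarrow>
     (case \<omega>1 of (\<Lambda>1, (s1, h1), \<epsilon>1) \<Rightarrow> case \<omega>2 of (\<Lambda>2, (s2, h2), \<epsilon>2) \<Rightarrow>
      case \<omega> of (\<Lambda>, (s, h), \<epsilon>) \<Rightarrow>
        s = s1 \<and> s = s2 \<and> \<Lambda> = \<Lambda>1 \<and> \<Lambda> = \<Lambda>2 \<and>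
        fmdom' h1 \<inter> fmdom' h2 = {} \<and> h = h1 ++\<^sub>f h2 \<and> \<epsilon> = ljoin \<epsilon>1 \<epsilon>2)"

definition sep_conj :: "assn \<Rightarrow> assn \<Rightarrow> assn" where
  "sep_conj p q = {\<omega>. \<exists>\<omega>p\<in>p. \<exists>\<omega>q\<in>q. comb \<omega>p \<omega>q \<omega>}"

definition hstar :: "hyperassn \<Rightarrow> hyperassn \<Rightarrow> hyperassn" where
  "hstar P Q = {S. \<exists>SP\<in>P. \<exists>SQ\<in>Q. S \<subseteq> sep_conj SP SQ
      \<and> (\<forall>\<omega>1\<in>SP. \<exists>\<omega>\<in>S. \<exists>\<omega>2\<in>SQ. comb \<omega>1 \<omega>2 \<omega>)
      \<and> (\<forall>\<omega>2\<in>SQ. \<exists>\<omega>\<in>S. \<exists>\<omega>1\<in>SP. comb \<omega>1 \<omega>2 \<omega>)}"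

definition overapprox :: "ext \<Rightarrow> ext \<Rightarrow> bool" where
  "overapprox \<omega>0 \<omega> \<longleftrightarrow> (lab \<omega>0 = Uk \<and> fst \<omega>0 = fst \<omega>) \<or> (lab \<omega>0 \<in> {Ok, Er} \<and> \<omega>0 = \<omega>)"

definition overapprox_set :: "ext set \<Rightarrow> ext set \<Rightarrow> bool" where
  "overapprox_set S0 S \<longleftrightarrow> (\<forall>\<omega>\<in>S0. lab \<omega> \<in> {Ok, Er} \<longrightarrow> \<omega> \<in> S) \<and> (\<forall>\<omega>\<in>S. \<exists>\<omega>0\<in>S0. overapprox \<omega>0 \<omega>)"

definition relax :: "hyperassn \<Rightarrow> hyperassn" where
  "relax Q = {S. \<exists>S0\<in>Q. overapprox_set S0 S}"

definition admissible_frame :: "cmd \<Rightarrow> assn \<Rightarrow> bool" where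
  "admissible_frame C f \<longleftrightarrow> (\<forall>\<omega>\<in>f. lab \<omega> = Ok) \<and>
     (\<forall>\<Lambda> s s' h. (\<forall>x. x \<notin> modv C \<longrightarrow> s x = s' x) \<longrightarrow>
        ((\<Lambda>, (s, h), Ok) \<in> f \<longleftrightarrow> (\<Lambda>, (s', h), Ok) \<in> f))"

definition valid :: "hyperassn \<Rightarrow> cmd \<Rightarrow> hyperassn \<Rightarrow> bool" where
  "valid P C Q \<longleftrightarrow> (\<forall>f. admissible_frame C f \<longrightarrow>
      (\<forall>S\<in>hstar P (Pow f). sem C S \<in> relax (hstar Q (Pow f))))"

type_synonym svar = string
type_synonym vvar = string

datatype hassn =
    HAtom svar label "(vvar \<Rightarrow> val) \<Rightarrow> assn"
  | HPure "(vvar \<Rightarrow> val) \<Rightarrow> bool"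
  | HAnd hassn hassn
  | HOr hassn hassn
  | HForallS svar hassn
  | HExistsS svar hassn
  | HForallV vvar hassn
  | HExistsV vvar hassn
  | HStar hassn hassn

fun hsat :: "(svar \<Rightarrow> ext) \<Rightarrow> (vvar \<Rightarrow> val) \<Rightarrow> hassn \<Rightarrow> ext set \<Rightarrow> bool" where
  "hsat \<Sigma> V (HAtom \<sigma> \<epsilon> p) S \<longleftrightarrow> lab (\<Sigma> \<sigma>) = \<epsilon> \<and> \<Sigma> \<sigma> \<in> p V"
| "hsat \<Sigma> V (HPure b) S \<longleftrightarrow> b V"
| "hsat \<Sigma> V (HAnd A B) S \<longleftrightarrow> hsat \<Sigma> V A S \<and> hsat \<Sigma> V B S"
| "hsat \<Sigma> V (HOr A B) S \<longleftrightarrow> hsat \<Sigma> V A S \<or> hsat \<Sigma> V B S"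
| "hsat \<Sigma> V (HForallS \<sigma> A) S \<longleftrightarrow> (\<forall>\<omega>\<in>S. hsat (\<Sigma>(\<sigma> := \<omega>)) V A S)"
| "hsat \<Sigma> V (HExistsS \<sigma> A) S \<longleftrightarrow> (\<exists>\<omega>\<in>S. hsat (\<Sigma>(\<sigma> := \<omega>)) V A S)"
| "hsat \<Sigma> V (HForallV x A) S \<longleftrightarrow> (\<forall>v. hsat \<Sigma> (V(x := v)) A S)"
| "hsat \<Sigma> V (HExistsV x A) S \<longleftrightarrow> (\<exists>v. hsat \<Sigma> (V(x := v)) A S)"
| "hsat \<Sigma> V (HStar A B) S \<longleftrightarrow>
     S \<in> hstar {S'. hsat \<Sigma> V A S'} {S'. hsat \<Sigma> V B S'}"

definition hsem :: "(svar \<Rightarrow> ext) \<Rightarrow> (vvar \<Rightarrow> val) \<Rightarrow> hassn \<Rightarrow> hyperassn" where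
  "hsem \<Sigma> V A = {S. hsat \<Sigma> V A S}"

fun no_uk :: "hassn \<Rightarrow> bool" where
  "no_uk (HAtom _ \<epsilon> _) \<longleftrightarrow> \<epsilon> \<noteq> Uk"
| "no_uk (HPure _) \<longleftrightarrow> True"
| "no_uk (HAnd A B) \<longleftrightarrow> no_uk A \<and> no_uk B"
| "no_uk (HOr A B) \<longleftrightarrow> no_uk A \<and> no_uk B"
| "no_uk (HForallS _ A) \<longleftrightarrow> no_uk A"
| "no_uk (HExistsS _ A) \<longleftrightarrow> no_uk A"
| "no_uk (HForallV _ A) \<longleftrightarrow> no_uk A"
| "no_uk (HExistsV _ A) \<longleftrightarrow> no_uk A"
| "no_uk (HStar A B) \<longleftrightarrow> no_uk A \<and> no_uk B"

fun no_star :: "hassn \<Rightarrow> bool" where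
  "no_star (HAtom _ _ _) \<longleftrightarrow> True"
| "no_star (HPure _) \<longleftrightarrow> True"
| "no_star (HAnd A B) \<longleftrightarrow> no_star A \<and> no_star B"
| "no_star (HOr A B) \<longleftrightarrow> no_star A \<and> no_star B"
| "no_star (HForallS _ A) \<longleftrightarrow> no_star A"
| "no_star (HExistsS _ A) \<longleftrightarrow> no_star A"
| "no_star (HForallV _ A) \<longleftrightarrow> no_star A"
| "no_star (HExistsV _ A) \<longleftrightarrow> no_star A"
| "no_star (HStar A B) \<longleftrightarrow> False"

fun ex_states_ok_er :: "hassn \<Rightarrow> bool" where
  "ex_states_ok_er (HAtom _ _ _) \<longleftrightarrow> True"
| "ex_states_ok_er (HPure _) \<longleftrightarrow> True"
| "ex_states_ok_er (HAnd A B) \<longleftrightarrow> ex_states_ok_er A \<and> ex_states_ok_er B"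
| "ex_states_ok_er (HOr A B) \<longleftrightarrow> ex_states_ok_er A \<and> ex_states_ok_er B"
| "ex_states_ok_er (HForallS _ A) \<longleftrightarrow> ex_states_ok_er A"
| "ex_states_ok_er (HExistsS \<sigma> A) \<longleftrightarrow> ex_states_ok_er A \<and>
     (\<forall>\<Sigma> V S \<omega>. \<omega> \<in> S \<longrightarrow> hsat (\<Sigma>(\<sigma> := \<omega>)) V A S \<longrightarrow> lab \<omega> \<in> {Ok, Er})"
| "ex_states_ok_er (HForallV _ A) \<longleftrightarrow> ex_states_ok_er A"
| "ex_states_ok_er (HExistsV _ A) \<longleftrightarrow> ex_states_ok_er A"
| "ex_states_ok_er (HStar A B) \<longleftrightarrow> ex_states_ok_er A \<and> ex_states_ok_er B"

end

theory Submission
  imports Defs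
begin

lemma overapprox_refl: "overapprox w w"
  unfolding overapprox_def by (cases "lab w") auto

lemma hsat_transfer:
  assumes "no_uk Q" "no_star Q" "ex_states_ok_er Q" "overapprox_set S0 S"
  shows "(\<forall>x. overapprox (\<Sigma>0 x) (\<Sigma> x)) \<Longrightarrow> hsat \<Sigma>0 V Q S0 \<Longrightarrow> hsat \<Sigma> V Q S"
  using assms
proof (induction Q arbitrary: \<Sigma>0 \<Sigma> V)
  case (HAtom x1 x2 x3)
  then have "lab (\<Sigma>0 x1) \<noteq> Uk" by auto
  then have "\<Sigma> x1 = \<Sigma>0 x1" using HAtom(1)[rule_format, of x1]
    unfolding overapprox_def by (cases "lab (\<Sigma>0 x1)") auto
  then show ?case using HAtom by simp
next
  case (HForallS x1 Q)
  show ?case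
  proof (simp, intro ballI)
    fix w assume "w \<in> S"
    then obtain w0 where "w0 \<in> S0" "overapprox w0 w"
      using HForallS.prems unfolding overapprox_set_def by blast
    show "hsat (\<Sigma>(x1 := w)) V Q S"
    proof (rule HForallS.IH[of "\<Sigma>0(x1 := w0)"])
      show "\<forall>x. overapprox ((\<Sigma>0(x1 := w0)) x) ((\<Sigma>(x1 := w)) x)"
        using HForallS.prems \<open>overapprox w0 w\<close> by auto
      show "hsat (\<Sigma>0(x1 := w0)) V Q S0" using HForallS.prems \<open>w0 \<in> S0\<close> by auto
    qed (use HForallS.prems in auto)
  qed
next
  case (HExistsS x1 Q)
  then obtain w0 where w0: "w0 \<in> S0" "hsat (\<Sigma>0(x1 := w0)) V Q S0" by auto
  then have "lab w0 \<in> {Ok, Er}" using HExistsS.prems(5) by (simp only: ex_states_ok_er.simps)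
  then have "w0 \<in> S" using w0(1) HExistsS.prems unfolding overapprox_set_def by blast
  moreover have "hsat (\<Sigma>(x1 := w0)) V Q S"
  proof (rule HExistsS.IH[of "\<Sigma>0(x1 := w0)"])
    show "\<forall>x. overapprox ((\<Sigma>0(x1 := w0)) x) ((\<Sigma>(x1 := w0)) x)"
      using HExistsS.prems overapprox_refl by auto
    show "hsat (\<Sigma>0(x1 := w0)) V Q S0" using w0 by simp
  qed (use HExistsS.prems in auto)
  ultimately show ?case by auto
qed auto

definition empF :: assn where "empF = {(L, (s, fmempty), Ok) | L s. True}"

lemma adm_empF: "admissible_frame C empF"
  unfolding admissible_frame_def empF_def lab_def by auto

lemma comb_emp: "comb w (fst w, (fst (fst (snd w)), fmempty), Ok) w"
  unfolding comb_def by (cases w; cases "snd (snd w)") auto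

lemma comb_empD: "w2 \<in> empF \<Longrightarrow> comb w1 w2 w \<Longrightarrow> w = w1"
  unfolding comb_def empF_def
  by (cases w1; cases w; cases "snd (snd w1)") auto

lemma in_hstar_emp: "S \<in> P \<Longrightarrow> S \<in> hstar P (Pow empF)"
  unfolding hstar_def
proof (intro CollectI bexI conjI)
  let ?SQ = "(\<lambda>w. (fst w, (fst (fst (snd w)), fmempty), Ok)) ` S"
  show "?SQ \<in> Pow empF" unfolding empF_def by auto
  show "S \<subseteq> sep_conj S ?SQ" unfolding sep_conj_def using comb_emp by blast
  show "\<forall>\<omega>1\<in>S. \<exists>\<omega>\<in>S. \<exists>\<omega>2\<in>?SQ. comb \<omega>1 \<omega>2 \<omega>" using comb_emp by blast
  show "\<forall>\<omega>2\<in>?SQ. \<exists>\<omega>\<in>S. \<exists>\<omega>1\<in>S. comb \<omega>1 \<omega>2 \<omega>" using comb_emp by blast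
qed

lemma hstar_emp_sub: "S0 \<in> hstar Q (Pow empF) \<Longrightarrow> S0 \<in> Q"
proof -
  assume "S0 \<in> hstar Q (Pow empF)"
  then obtain SP SF where h: "SP \<in> Q" "SF \<subseteq> empF" "S0 \<subseteq> sep_conj SP SF"
    "\<forall>\<omega>1\<in>SP. \<exists>\<omega>\<in>S0. \<exists>\<omega>2\<in>SF. comb \<omega>1 \<omega>2 \<omega>"
    unfolding hstar_def by blast
  have "S0 \<subseteq> SP"
  proof
    fix w assume "w \<in> S0"
    then obtain w1 w2 where "w1 \<in> SP" "w2 \<in> SF" "comb w1 w2 w"
      using h(3) unfolding sep_conj_def by blast
    then show "w \<in> SP" using comb_empD h(2) by blast
  qed
  moreover have "SP \<subseteq> S0" using h(4) h(2) comb_empD by blast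
  ultimately show ?thesis using h(1) by simp
qed

lemma part1: "valid P C Q \<Longrightarrow> S \<in> P \<Longrightarrow> sem C S \<in> relax Q"
proof -
  assume "valid P C Q" "S \<in> P"
  then have "sem C S \<in> relax (hstar Q (Pow empF))"
    using adm_empF in_hstar_emp unfolding valid_def by blast
  then show ?thesis unfolding relax_def using hstar_emp_sub by blast
qed

theorem theorem4p2:
  shows "(\<forall>P C Q S. valid P C Q \<longrightarrow> S \<in> P \<longrightarrow> sem C S \<in> relax Q)
       \<and> (\<forall>P C (Q :: hassn) \<Sigma> V S. valid P C (hsem \<Sigma> V Q) \<longrightarrow> S \<in> P \<longrightarrow>
            no_uk Q \<longrightarrow> no_star Q \<longrightarrow> ex_states_ok_er Q \<longrightarrow> sem C S \<in> hsem \<Sigma> V Q)"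
proof (intro conjI allI impI)
  show "\<And>P C Q S. valid P C Q \<Longrightarrow> S \<in> P \<Longrightarrow> sem C S \<in> relax Q" by (rule part1)
next
  fix P C Q \<Sigma> V S
  assume a: "valid P C (hsem \<Sigma> V Q)" "S \<in> P" "no_uk Q" "no_star Q" "ex_states_ok_er Q"
  have "sem C S \<in> relax (hsem \<Sigma> V Q)" by (rule part1[OF a(1,2)])
  then obtain S0 where "hsat \<Sigma> V Q S0" "overapprox_set S0 (sem C S)"
    unfolding relax_def hsem_def by auto
  then show "sem C S \<in> hsem \<Sigma> V Q"
    using hsat_transfer[OF a(3-5)] overapprox_refl unfolding hsem_def by blast
qed

end
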